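(* Let $G=(V,E)$ be a DAG with $n=|V|$ nodes that is $(e,d)$-reducible. Then $\Pi^{BW}_{cc}(G)\le\frac{e(e+1)}{2}+dn$. In particular, for every constant $\Delta$ there is a constant $C$ such that every DAG $G$ on $n\ge 3$ nodes with maximum indegree at most $\Delta$ satisfies $\Pi^{BW}_{cc}(G)\le C\left(\frac{n\log\log n}{\log n}\right)^2$.
   Context: For a DAG $G$, $\mathsf{depth}(G)$ is the number of nodes on a longest directed path; $G-S$ is $G$ with the nodes of $S$ and incident edges removed. $G$ is $(e,d)$-reducible if there is $S\subseteq V$ with $|S|\le e$ and $\mathsf{depth}(G-S)\le d$. A parallel-black sequential-white pebbling of $G=(V,E)$ is a sequence $P=(P_0,\ldots,P_t)$ of pairs $P_i=(P_i^B,P_i^W)$ of subsets of $V$ such that: $P_0=(\emptyset,\emptyset)$; $P_t^W=\emptyset$; $|P_i^W\setminus P_{i-1}^W|\le1$ for all $i\in[t]$; for all $i\in[t]$, if $x\in P_{i-1}^W\setminus P_i^W$ then $\mathsf{parents}(x)\subseteq P_{i-1}^W\cup P_{i-1}^B$; for all $i\in[t]$, if $x\in P_i^B\setminus P_{i-1}^B$ then $\mathsf{parents}(x)\subseteq P_{i-1}^W\cup P_{i-1}^B$; and every sink $x$ of $G$ lies in $P_z^W\cup P_z^B$ for some $z\le t$. $\Pi^{BW}_{cc}(G)=\min_P\sum_{i=1}^t|P_i^B\cup P_i^W|$ over all such pebblings. *)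

theory Defs
  imports Complex_Main
begin

definition is_dag :: "'a set \<Rightarrow> ('a \<times> 'a) set \<Rightarrow> bool" where
  "is_dag V E \<longleftrightarrow> finite V \<and> E \<subseteq> V \<times> V \<and> acyclic E"

definition parents :: "('a \<times> 'a) set \<Rightarrow> 'a \<Rightarrow> 'a set" where
  "parents E v = {u. (u, v) \<in> E}"

definition is_sink :: "'a set \<Rightarrow> ('a \<times> 'a) set \<Rightarrow> 'a \<Rightarrow> bool" where
  "is_sink V E v \<longleftrightarrow> v \<in> V \<and> (\<forall>w. (v, w) \<notin> E)"

definition is_path :: "'a set \<Rightarrow> ('a \<times> 'a) set \<Rightarrow> 'a list \<Rightarrow> bool" where
  "is_path V E xs \<longleftrightarrow> xs \<noteq> [] \<and> set xs \<subseteq> V \<and>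
     (\<forall>i. Suc i < length xs \<longrightarrow> (xs ! i, xs ! Suc i) \<in> E)"

text \<open>Number of nodes on a longest directed path (0 for the empty graph).\<close>
definition depth :: "'a set \<Rightarrow> ('a \<times> 'a) set \<Rightarrow> nat" where
  "depth V E = Sup (length ` {xs. is_path V E xs})"

text \<open>G - S : remove the nodes of S and incident edges.\<close>
definition del_edges :: "'a set \<Rightarrow> ('a \<times> 'a) set \<Rightarrow> 'a set \<Rightarrow> ('a \<times> 'a) set" where
  "del_edges V E S = E \<inter> ((V - S) \<times> (V - S))"

definition reducible :: "'a set \<Rightarrow> ('a \<times> 'a) set \<Rightarrow> nat \<Rightarrow> nat \<Rightarrow> bool" where
  "reducible V E e d \<longleftrightarrow> (\<exists>S. S \<subseteq> V \<and> card S \<le> e \<and> depth (V - S) (del_edges V E S) \<le> d)"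

text \<open>Parallel-black sequential-white pebbling P_0..P_t; P i = (black set, white set).\<close>
definition bw_pebbling :: "'a set \<Rightarrow> ('a \<times> 'a) set \<Rightarrow> (nat \<Rightarrow> 'a set \<times> 'a set) \<Rightarrow> nat \<Rightarrow> bool" where
  "bw_pebbling V E P t \<longleftrightarrow>
     P 0 = ({}, {}) \<and>
     snd (P t) = {} \<and>
     (\<forall>i\<le>t. fst (P i) \<subseteq> V \<and> snd (P i) \<subseteq> V) \<and>
     (\<forall>i\<in>{1..t}. card (snd (P i) - snd (P (i - 1))) \<le> 1) \<and>
     (\<forall>i\<in>{1..t}. \<forall>x \<in> snd (P (i - 1)) - snd (P i).
         parents E x \<subseteq> snd (P (i - 1)) \<union> fst (P (i - 1))) \<and>
     (\<forall>i\<in>{1..t}. \<forall>x \<in> fst (P i) - fst (P (i - 1)).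
         parents E x \<subseteq> snd (P (i - 1)) \<union> fst (P (i - 1))) \<and>
     (\<forall>x. is_sink V E x \<longrightarrow> (\<exists>z\<le>t. x \<in> snd (P z) \<union> fst (P z)))"

definition pebbling_cost :: "(nat \<Rightarrow> 'a set \<times> 'a set) \<Rightarrow> nat \<Rightarrow> nat" where
  "pebbling_cost P t = (\<Sum>i=1..t. card (fst (P i) \<union> snd (P i)))"

definition Pi_BW_cc :: "'a set \<Rightarrow> ('a \<times> 'a) set \<Rightarrow> nat" where
  "Pi_BW_cc V E = (LEAST c. \<exists>P t. bw_pebbling V E P t \<and> pebbling_cost P t = c)"

definition max_indeg_le :: "'a set \<Rightarrow> ('a \<times> 'a) set \<Rightarrow> nat \<Rightarrow> bool" where
  "max_indeg_le V E \<Delta> \<longleftrightarrow> (\<forall>v\<in>V. card (parents E v) \<le> \<Delta>)"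

end

theory Submission imports Defs "HOL-Real_Asymp.Real_Asymp" "HOL-Analysis.Complex_Transcendental" begin

lemma path_trancl:
  assumes "is_path V E xs" "i < j" "j < length xs"
  shows "(xs!i, xs!j) \<in> E\<^sup>+"
  using assms(2,3)
proof (induction j)
  case 0 then show ?case by simp
next
  case (Suc j)
  have e: "(xs!j, xs!Suc j) \<in> E" using assms(1) Suc.prems unfolding is_path_def by blast
  show ?case
  proof (cases "i = j")
    case True then show ?thesis using e by auto
  next
    case False
    then have "(xs!i, xs!j) \<in> E\<^sup>+" using Suc by auto
    then show ?thesis using e by (meson trancl_into_trancl)
  qed
qed

lemma path_distinct:
  assumes "acyclic E" "is_path V E xs"
  shows "distinct xs"
proof -
  have "xs!i \<noteq> xs!j" if "i < length xs" "j < length xs" "i \<noteq> j" for i j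
  proof
    assume eq: "xs!i = xs!j"
    show False
    proof (cases "i < j")
      case True
      then have "(xs!i, xs!j) \<in> E\<^sup>+" using path_trancl assms that by blast
      then show False using eq assms(1) unfolding acyclic_def by auto
    next
      case False
      then have "j < i" using that by auto
      then have "(xs!j, xs!i) \<in> E\<^sup>+" using path_trancl assms that by blast
      then show False using eq assms(1) unfolding acyclic_def by auto
    qed
  qed
  then show ?thesis by (simp add: distinct_conv_nth)
qed

lemma path_len:
  assumes "is_dag V E" "is_path V E xs"
  shows "length xs \<le> card V"
proof -
  have "distinct xs" using path_distinct assms unfolding is_dag_def by blast
  then have "length xs = card (set xs)" by (simp add: distinct_card)
  also have "\<dots> \<le> card V" using assms unfolding is_dag_def is_path_def by (meson card_mono)
  finally show ?thesis .
qed

lemma depth_le: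
  assumes "\<And>xs. is_path V E xs \<Longrightarrow> length xs \<le> D"
  shows "depth V E \<le> D"
proof (cases "{xs. is_path V E xs} = {}")
  case True then have "Collect (is_path V E) = {}" by blast
  then show ?thesis unfolding depth_def by (metis Sup_nat_empty image_empty le0)
next
  case False
  then show ?thesis unfolding depth_def using assms by (auto intro!: cSup_least)
qed

lemma depth_ge:
  assumes "is_dag V E" "is_path V E xs"
  shows "length xs \<le> depth V E"
proof -
  have "bdd_above (length ` {xs. is_path V E xs})"
    using path_len[OF assms(1)] by (auto intro!: bdd_aboveI)
  then show ?thesis unfolding depth_def using assms(2) by (auto intro!: cSup_upper)
qed

lemma dag_del: "is_dag V E \<Longrightarrow> is_dag (V - S) (del_edges V E S)"
  unfolding is_dag_def del_edges_def by (auto intro: acyclic_subset)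

lemma path_snoc:
  assumes "is_path V E xs" "last xs = u" "(u, v) \<in> E" "v \<in> V"
  shows "is_path V E (xs @ [v])"
proof -
  have ne: "xs \<noteq> []" using assms(1) unfolding is_path_def by auto
  have "((xs @ [v]) ! i, (xs @ [v]) ! Suc i) \<in> E" if "Suc i < length (xs @ [v])" for i
  proof (cases "Suc i < length xs")
    case True
    then show ?thesis using assms(1) by (simp add: nth_append is_path_def)
  next
    case False
    then have "i = length xs - 1" using that by auto
    then have "(xs @ [v]) ! i = u" "(xs @ [v]) ! Suc i = v"
      using ne assms(2) by (auto simp: nth_append last_conv_nth)
    then show ?thesis using assms(3) by simp
  qed
  then show ?thesis using assms(1,4) unfolding is_path_def by auto
qed

lemma sum_g:
  fixes k d n :: nat
  defines "g \<equiv> \<lambda>i. if i \<le> k then i else if i \<le> k + d then n else 0"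
  shows "j \<le> d \<Longrightarrow> (\<Sum>i=1..k+j. g i) = (\<Sum>i=1..k. i) + j * n"
proof (induction j)
  case 0
  then show ?case unfolding g_def by (auto intro: sum.cong)
next
  case (Suc j)
  then show ?case unfolding g_def by simp
qed

lemma part1:
  assumes dag: "is_dag V E" and SV: "S \<subseteq> V" and dep: "depth (V - S) (del_edges V E S) \<le> d"
  shows "2 * Pi_BW_cc V E \<le> card S * (card S + 1) + 2 * d * card V"
proof -
  have finV: "finite V" and EV: "E \<subseteq> V \<times> V" using dag unfolding is_dag_def by auto
  obtain s where s: "set s = S" "distinct s" using finite_distinct_list finite_subset[OF SV finV] by blast
  define k where "k = length s"
  have cardS: "card S = k" using s k_def by (metis distinct_card)
  define E' where "E' = del_edges V E S"
  define B where "B j = {v \<in> V - S. \<forall>xs. is_path (V-S) E' xs \<and> last xs = v \<longrightarrow> length xs \<le> j}" for j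
  have single: "is_path (V-S) E' [v]" if "v \<in> V - S" for v
    using that unfolding is_path_def by auto
  have B0: "B 0 = {}" using single unfolding B_def by fastforce
  have Bd: "B d = V - S"
  proof -
    have "length xs \<le> d" if "is_path (V-S) E' xs" for xs
      using depth_ge[OF dag_del[OF dag] that[unfolded E'_def]] dep by simp
    then show ?thesis unfolding B_def by auto
  qed
  have BV: "B j \<subseteq> V" for j unfolding B_def by auto
  have Bstep: "u \<in> B j" if "(u,v) \<in> E" "u \<notin> S" "v \<in> B (Suc j)" for u v j
  proof -
    have uV: "u \<in> V" using that(1) EV by auto
    have vV: "v \<in> V - S" using that(3) unfolding B_def by auto
    have e: "(u, v) \<in> E'" using that(1,2) uV vV unfolding E'_def del_edges_def by auto
    have "length xs \<le> j" if "is_path (V-S) E' xs" "last xs = u" for xs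
    proof -
      have "is_path (V-S) E' (xs @ [v])" using path_snoc[OF that e] vV by simp
      then have "length (xs @ [v]) \<le> Suc j" using \<open>v \<in> B (Suc j)\<close> unfolding B_def by auto
      then show ?thesis by simp
    qed
    then show ?thesis using uV that(2) unfolding B_def by auto
  qed
  define P where "P i = (if i \<le> k then ({}, set (take i s)) else if i \<le> k + d then (B (i - k), S) else ({}, {}))" for i
  define t where "t = k + d + 1"
  have Pmid: "P i = (B (i - k), S)" if "k \<le> i" "i \<le> k + d" for i
  proof (cases "i = k")
    case True then show ?thesis using B0 s k_def unfolding P_def by simp
  next
    case False then show ?thesis using that unfolding P_def by simp
  qed
  have Pt: "P t = ({}, {})" unfolding P_def t_def by simp
  have Plow: "P i = ({}, set (take i s))" if "i \<le> k" for i using that unfolding P_def by simp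
  have cases3: "(i \<le> k) \<or> (k + 1 \<le> i \<and> i \<le> k + d) \<or> i = t" if "i \<in> {1..t}" for i
    using that unfolding t_def by auto
  have c4: "card (snd (P i) - snd (P (i - 1))) \<le> 1" if iT: "i \<in> {1..t}" for i
  proof -
    consider "i \<le> k" | "k + 1 \<le> i \<and> i \<le> k + d" | "i = t" using cases3[OF iT] by blast
    then show ?thesis
    proof cases
      case 1
      obtain i' where i': "i = Suc i'" using iT by (cases i) auto
      have "take i s = take i' s @ [s ! i']" using 1 i' k_def by (simp add: take_Suc_conv_app_nth)
      then have "snd (P i) - snd (P (i - 1)) \<subseteq> {s ! i'}" using 1 i' Plow by auto
      then have "card (snd (P i) - snd (P (i - 1))) \<le> card {s ! i'}" by (intro card_mono) auto
      then show ?thesis by simp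
    next
      case 2
      have "P (i - 1) = (B (i - 1 - k), S)" using 2 by (intro Pmid) auto
      then show ?thesis using 2 Pmid[of i] by simp
    next
      case 3
      then show ?thesis using Pt by simp
    qed
  qed
  have c5: "parents E x \<subseteq> snd (P (i - 1)) \<union> fst (P (i - 1))"
    if iT: "i \<in> {1..t}" and xin: "x \<in> snd (P (i - 1)) - snd (P i)" for i x
  proof -
    consider "i \<le> k" | "k + 1 \<le> i \<and> i \<le> k + d" | "i = t" using cases3[OF iT] by blast
    then show ?thesis
    proof cases
      case 1
      then have "snd (P (i - 1)) \<subseteq> snd (P i)" using Plow[of i] Plow[of "i - 1"]
        by (simp add: set_take_subset_set_take)
      then show ?thesis using xin by auto
    next
      case 2
      have "P (i - 1) = (B (i - 1 - k), S)" using 2 by (intro Pmid) auto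
      then show ?thesis using 2 xin Pmid[of i] by simp
    next
      case 3
      then have "P (i - 1) = (B d, S)" using Pmid[of "k + d"] t_def by simp
      then show ?thesis using Bd EV SV unfolding parents_def by auto
    qed
  qed
  have c6: "parents E x \<subseteq> snd (P (i - 1)) \<union> fst (P (i - 1))"
    if iT: "i \<in> {1..t}" and xin: "x \<in> fst (P i) - fst (P (i - 1))" for i x
  proof -
    consider "i \<le> k" | "k + 1 \<le> i \<and> i \<le> k + d" | "i = t" using cases3[OF iT] by blast
    then show ?thesis
    proof cases
      case 1
      then show ?thesis using xin Plow by simp
    next
      case 2
      have Pi: "P i = (B (Suc (i - 1 - k)), S)" using Pmid[of i] 2 by (simp add: Suc_diff_Suc)
      have Pi1: "P (i - 1) = (B (i - 1 - k), S)" using 2 by (intro Pmid) auto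
      show ?thesis
      proof
        fix u assume "u \<in> parents E x"
        then have ux: "(u, x) \<in> E" unfolding parents_def by auto
        show "u \<in> snd (P (i - 1)) \<union> fst (P (i - 1))"
        proof (cases "u \<in> S")
          case True then show ?thesis using Pi1 by simp
        next
          case False
          then have "u \<in> B (i - 1 - k)" using Bstep[OF ux False] xin Pi by simp
          then show ?thesis using Pi1 by simp
        qed
      qed
    next
      case 3
      then show ?thesis using xin Pt by simp
    qed
  qed
  have c7: "\<exists>z\<le>t. x \<in> snd (P z) \<union> fst (P z)" if "is_sink V E x" for x
  proof -
    have "x \<in> V" using that unfolding is_sink_def by auto
    then have "x \<in> snd (P (k + d)) \<union> fst (P (k + d))" using Pmid[of "k + d"] Bd by auto
    then show ?thesis unfolding t_def by (intro exI[of _ "k + d"]) auto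
  qed
  have c3: "fst (P i) \<subseteq> V \<and> snd (P i) \<subseteq> V" for i
    unfolding P_def using BV SV s set_take_subset[of i s] by auto
  have peb: "bw_pebbling V E P t"
    unfolding bw_pebbling_def
  proof (intro conjI)
    show "P 0 = ({}, {})" using Plow[of 0] by simp
    show "snd (P t) = {}" using Pt by simp
  qed (use c3 c4 c5 c6 c7 in blast)+
  define g where "g \<equiv> \<lambda>i::nat. if i \<le> k then i else if i \<le> k + d then card V else 0"
  have cg: "card (fst (P i) \<union> snd (P i)) \<le> g i" if iT: "i \<in> {1..t}" for i
  proof -
    consider "i \<le> k" | "k + 1 \<le> i \<and> i \<le> k + d" | "i = t" using cases3[OF iT] by blast
    then show ?thesis
    proof cases
      case 1
      then show ?thesis using Plow[of i] card_length[of "take i s"] unfolding g_def by simp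
    next
      case 2
      have "card (B (i - k) \<union> S) \<le> card V" using BV SV finV by (intro card_mono) auto
      then show ?thesis using Pmid[of i] 2 unfolding g_def by simp
    next
      case 3
      then show ?thesis using Pt by simp
    qed
  qed
  have "pebbling_cost P t \<le> (\<Sum>i=1..t. g i)"
    unfolding pebbling_cost_def using cg by (intro sum_mono) auto
  also have "(\<Sum>i=1..t. g i) = (\<Sum>i=1..k+d. g i)" unfolding t_def g_def by simp
  also have "\<dots> = (\<Sum>i=1..k. i) + d * card V" using sum_g[where k=k and d=d and n="card V" and j=d] unfolding g_def by simp
  finally have cost: "pebbling_cost P t \<le> (\<Sum>i=1..k. i) + d * card V" .
  have gauss: "2 * (\<Sum>i=1..k. i) = k * (k + 1)"
    using gauss_sum_from_Suc_0[of k, where ?'a = nat] by simp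
  have "Pi_BW_cc V E \<le> pebbling_cost P t"
    unfolding Pi_BW_cc_def using peb by (intro Least_le) blast
  then have "2 * Pi_BW_cc V E \<le> 2 * (\<Sum>i=1..k. i) + 2 * d * card V" using cost by linarith
  then show ?thesis using gauss cardS by simp
qed

lemma proj_mono:
  fixes x y p b :: nat
  assumes "0 < p" "x < y" "\<not> (x div (p * b) = y div (p * b) \<and> x div p < y div p)"
  shows "x div (p * b) * p + x mod p < y div (p * b) * p + y mod p"
proof (cases "x div (p * b) < y div (p * b)")
  case True
  have "x div (p * b) * p + x mod p < x div (p * b) * p + p" using assms(1) by simp
  also have "\<dots> = (x div (p * b) + 1) * p" by simp
  also have "\<dots> \<le> y div (p * b) * p" using True by (intro mult_right_mono) auto
  finally show ?thesis by simp
next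
  case False
  have "x div (p * b) \<le> y div (p * b)" using assms(2) by (simp add: div_le_mono)
  then have eq: "x div (p * b) = y div (p * b)" using False by simp
  then have "\<not> x div p < y div p" using assms(3) by simp
  moreover have "x div p \<le> y div p" using assms(2) by (simp add: div_le_mono)
  ultimately have eq2: "x div p = y div p" by simp
  have "x mod p < y mod p" using assms(2) eq2 by (metis add_less_cancel_left div_mult_mod_eq)
  then show ?thesis using eq by simp
qed

lemma strict_len:
  fixes f :: "nat \<Rightarrow> nat"
  assumes "\<And>i. Suc i < len \<Longrightarrow> f i < f (Suc i)" "\<And>i. i < len \<Longrightarrow> f i \<le> K"
  shows "len \<le> K + 1"
proof -
  have "i \<le> f i" if "i < len" for i using that
  proof (induction i)
    case 0 then show ?case by simp
  next
    case (Suc i)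
    then have "f i < f (Suc i)" using assms(1) by blast
    then show ?case using Suc by simp
  qed
  then show ?thesis
  proof (cases len)
    case 0 then show ?thesis by simp
  next
    case (Suc m)
    then have "m \<le> f m" "f m \<le> K" using \<open>\<And>i. i < len \<Longrightarrow> i \<le> f i\<close> assms(2) by auto
    then show ?thesis using Suc by simp
  qed
qed

lemma card_E_le:
  assumes "is_dag V E" "max_indeg_le V E \<Delta>"
  shows "card E \<le> \<Delta> * card V"
proof -
  have finV: "finite V" and EV: "E \<subseteq> V \<times> V" using assms(1) unfolding is_dag_def by auto
  have "E \<subseteq> (\<Union>v\<in>V. parents E v \<times> {v})" using EV unfolding parents_def by auto
  moreover have "finite (\<Union>v\<in>V. parents E v \<times> {v})"
    using finV EV unfolding parents_def by (intro finite_UN_I finite_cartesian_product) (auto intro: finite_subset)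
  ultimately have "card E \<le> card (\<Union>v\<in>V. parents E v \<times> {v})" by (rule card_mono[rotated])
  also have "\<dots> \<le> (\<Sum>v\<in>V. card (parents E v \<times> {v}))" by (rule card_UN_le[OF finV])
  also have "\<dots> = (\<Sum>v\<in>V. card (parents E v))" by (simp add: card_cartesian_product)
  also have "\<dots> \<le> (\<Sum>v\<in>V. \<Delta>)" using assms(2) unfolding max_indeg_le_def by (intro sum_mono) auto
  finally show ?thesis by (simp add: mult.commute)
qed

lemma height_exists:
  assumes dag: "is_dag V E"
  shows "\<exists>h. (\<forall>v\<in>V. h v \<le> card V) \<and> (\<forall>u v. (u,v) \<in> E \<longrightarrow> h u < h v)"
proof -
  have EV: "E \<subseteq> V \<times> V" using dag unfolding is_dag_def by auto
  define L where "L v = length ` {xs. is_path V E xs \<and> last xs = v}" for v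
  define h where "h v = Max (L v)" for v
  have finL: "finite (L v)" for v
  proof -
    have "L v \<subseteq> {..card V}" unfolding L_def using path_len[OF dag] by auto
    then show ?thesis by (rule finite_subset) auto
  qed
  have neL: "L v \<noteq> {}" if "v \<in> V" for v
  proof -
    have "is_path V E [v]" using that unfolding is_path_def by auto
    then show ?thesis unfolding L_def by force
  qed
  have hle: "h v \<le> card V" if "v \<in> V" for v
    using Max_in[OF finL neL[OF that]] path_len[OF dag] unfolding h_def L_def by auto
  have hlt: "h u < h v" if "(u,v) \<in> E" for u v
  proof -
    have uV: "u \<in> V" and vV: "v \<in> V" using that EV by auto
    obtain xs where xs: "is_path V E xs" "last xs = u" "length xs = h u"
      using Max_in[OF finL neL[OF uV]] unfolding h_def L_def by auto
    have "is_path V E (xs @ [v])" using path_snoc[OF xs(1,2) that vV] .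
    then have "length (xs @ [v]) \<in> L v" unfolding L_def by force
    then have "length (xs @ [v]) \<le> h v" unfolding h_def using finL by simp
    then show ?thesis using xs(3) by simp
  qed
  show ?thesis using hle hlt by blast
qed

lemma reduce:
  assumes dag: "is_dag V E" and indeg: "max_indeg_le V E \<Delta>" and B: "1 \<le> B" and q: "1 \<le> q"
  shows "\<exists>S \<subseteq> V. q * card S \<le> \<Delta> * card V \<and>
           real (depth (V - S) (del_edges V E S)) \<le> real (card V) / real B + real B ^ (q - 1)"
proof -
  have finV: "finite V" and EV: "E \<subseteq> V \<times> V" using dag unfolding is_dag_def by auto
  have finE: "finite E" using EV finV by (meson finite_SigmaI finite_subset)
  obtain h where hle: "\<And>v. v \<in> V \<Longrightarrow> h v \<le> card V" and hlt: "\<And>u v. (u,v) \<in> E \<Longrightarrow> h u < h v"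
    using height_exists[OF dag] by blast
  define bad where "bad j u v \<longleftrightarrow> h u div (B^j * B) = h v div (B^j * B) \<and> h u div B^j < h v div B^j" for j u v
  define Eb where "Eb j = {(u,v) \<in> E. bad j u v}" for j
  have notbad: "\<not> bad j' u v" if "bad j u v" "j < j'" for j j' u v
  proof -
    have Bj: "B^j' = (B^j * B) * B^(j' - Suc j)" using that(2)
      by (metis Suc_leI le_add_diff_inverse power_Suc2 power_add)
    have "h u div B^j' = h v div B^j'" using that(1) unfolding bad_def Bj by (simp add: div_mult2_eq)
    then show ?thesis unfolding bad_def by simp
  qed
  have disj: "Eb i \<inter> Eb j = {}" if "i \<noteq> j" for i j
  proof (cases "i < j")
    case True then show ?thesis using notbad unfolding Eb_def by blast
  next
    case False then have "j < i" using that by simp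
    then show ?thesis using notbad unfolding Eb_def by blast
  qed
  have EbE: "Eb j \<subseteq> E" for j unfolding Eb_def by auto
  have finEb: "finite (Eb j)" for j using finite_subset[OF EbE finE] .
  have "(\<Sum>j<q. card (Eb j)) = card (\<Union>j<q. Eb j)"
    using disj finEb by (intro card_UN_disjoint[symmetric]) auto
  also have "\<dots> \<le> card E" using finE EbE by (intro card_mono) auto
  also have "\<dots> \<le> \<Delta> * card V" using card_E_le[OF dag indeg] .
  finally have sumle: "(\<Sum>j<q. card (Eb j)) \<le> \<Delta> * card V" .
  have "\<exists>j<q. q * card (Eb j) \<le> \<Delta> * card V"
  proof (rule ccontr)
    assume "\<not> ?thesis"
    then have "\<And>j. j < q \<Longrightarrow> \<Delta> * card V < q * card (Eb j)" by auto
    then have "(\<Sum>j<q. \<Delta> * card V) < (\<Sum>j<q. q * card (Eb j))"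
      using q by (intro sum_strict_mono) (auto simp: lessThan_empty_iff)
    also have "\<dots> = q * (\<Sum>j<q. card (Eb j))" by (simp add: sum_distrib_left)
    also have "\<dots> \<le> q * (\<Delta> * card V)" using sumle by simp
    finally show False by simp
  qed
  then obtain j where j: "j < q" "q * card (Eb j) \<le> \<Delta> * card V" by blast
  define S where "S = snd ` Eb j"
  have SV: "S \<subseteq> V" unfolding S_def Eb_def using EV by auto
  have cS: "q * card S \<le> \<Delta> * card V"
  proof -
    have "card S \<le> card (Eb j)" unfolding S_def by (rule card_image_le[OF finEb])
    then show ?thesis using j(2) by (meson le_trans mult_le_mono2)
  qed
  define p where "p = B ^ j"
  have p0: "0 < p" unfolding p_def using B by simp
  define pr where "pr x = x div (p * B) * p + x mod p" for x
  define K where "K = card V div (p * B) * p + (p - 1)"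
  have prle: "pr x \<le> K" if "x \<le> card V" for x
  proof -
    have "x div (p * B) \<le> card V div (p * B)" using that by (rule div_le_mono)
    then have "x div (p * B) * p \<le> card V div (p * B) * p" by simp
    moreover have "x mod p \<le> p - 1" using mod_less_divisor[OF p0, of x] by linarith
    ultimately show ?thesis unfolding pr_def K_def by linarith
  qed
  have lenle: "length xs \<le> K + 1" if xs: "is_path (V - S) (del_edges V E S) xs" for xs
  proof (rule strict_len[where f = "\<lambda>i. pr (h (xs ! i))"])
    fix i assume i: "Suc i < length xs"
    then have e: "(xs ! i, xs ! Suc i) \<in> E" "xs ! Suc i \<notin> S"
      using xs unfolding is_path_def del_edges_def by auto
    then have nb: "\<not> bad j (xs ! i) (xs ! Suc i)" unfolding S_def Eb_def by force
    show "pr (h (xs ! i)) < pr (h (xs ! Suc i))"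
      unfolding pr_def using proj_mono[OF p0 hlt[OF e(1)]] nb unfolding bad_def p_def by simp
  next
    fix i assume "i < length xs"
    then have "xs ! i \<in> set xs" by simp
    then have "xs ! i \<in> V" using xs unfolding is_path_def by auto
    then show "pr (h (xs ! i)) \<le> K" using prle hle by blast
  qed
  have dep: "depth (V - S) (del_edges V E S) \<le> K + 1" using lenle by (rule depth_le)
  have "real (K + 1) = real (card V div (p * B)) * real p + real p" unfolding K_def using p0 by simp
  also have "\<dots> \<le> real (card V) / real (p * B) * real p + real p"
    using of_nat_div_le_of_nat[of "card V" "p * B"] by (intro add_right_mono mult_right_mono) simp_all
  also have "\<dots> = real (card V) / real B + real p" using p0 by simp
  also have "\<dots> \<le> real (card V) / real B + real B ^ (q - 1)"
    unfolding p_def using B j(1) by (simp add: power_increasing)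
  finally show ?thesis using dep SV cS
    by (intro exI[of _ S]) (auto intro: order_trans[OF of_nat_mono[OF dep]])
qed

lemma part1_real:
  assumes "is_dag V E" "reducible V E e d"
  shows "real (Pi_BW_cc V E) \<le> real e * (real e + 1) / 2 + real d * real (card V)"
proof -
  obtain S where S: "S \<subseteq> V" "card S \<le> e" "depth (V - S) (del_edges V E S) \<le> d"
    using assms(2) unfolding reducible_def by blast
  have "2 * Pi_BW_cc V E \<le> card S * (card S + 1) + 2 * d * card V" using part1[OF assms(1) S(1,3)] .
  also have "card S * (card S + 1) \<le> e * (e + 1)" using S(2) by (intro mult_le_mono) auto
  finally have "2 * Pi_BW_cc V E \<le> e * (e + 1) + 2 * d * card V" by simp
  then have "real (2 * Pi_BW_cc V E) \<le> real (e * (e + 1) + 2 * d * card V)" by (rule of_nat_mono)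
  then have "2 * real (Pi_BW_cc V E) \<le> real e * (real e + 1) + 2 * real d * real (card V)" by (simp add: algebra_simps)
  then show ?thesis by (simp add: field_simps)
qed

lemma trivial_bound:
  assumes "is_dag V E"
  shows "real (Pi_BW_cc V E) \<le> real (card V) ^ 2"
proof -
  have "depth (V - V) (del_edges V E V) \<le> 0"
    by (rule depth_le) (auto simp: is_path_def)
  then have "2 * Pi_BW_cc V E \<le> card V * (card V + 1) + 2 * 0 * card V"
    using part1[OF assms, of V 0] by simp
  moreover have "card V * (card V + 1) \<le> 2 * (card V * card V)"
    by (cases "card V") auto
  ultimately have "Pi_BW_cc V E \<le> card V * card V" by linarith
  then have "real (Pi_BW_cc V E) \<le> real (card V * card V)" by (rule of_nat_mono)
  then show ?thesis by (simp add: power2_eq_square)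
qed

lemma param_bound:
  assumes dag: "is_dag V E" and indeg: "max_indeg_le V E \<Delta>" and B: "1 \<le> B" and q: "1 \<le> q"
  shows "real (Pi_BW_cc V E) \<le> (real \<Delta> * real (card V) / real q) ^ 2
            + real (card V) * (real (card V) / real B + real B ^ (q - 1))"
proof -
  obtain S where S: "S \<subseteq> V" "q * card S \<le> \<Delta> * card V"
    "real (depth (V - S) (del_edges V E S)) \<le> real (card V) / real B + real B ^ (q - 1)"
    using reduce[OF dag indeg B q] by blast
  define D where "D = depth (V - S) (del_edges V E S)"
  define e where "e = card S"
  have "reducible V E e D" unfolding reducible_def e_def D_def using S(1) by blast
  then have P: "real (Pi_BW_cc V E) \<le> real e * (real e + 1) / 2 + real D * real (card V)"
    by (rule part1_real[OF dag])
  have "real e \<le> real e * real e"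
    by (cases e) auto
  then have e1: "real e * (real e + 1) / 2 \<le> (real e) ^ 2" by (simp add: power2_eq_square algebra_simps)
  have "real q * real e \<le> real \<Delta> * real (card V)"
    using S(2) unfolding e_def by (metis of_nat_mono of_nat_mult)
  then have "real e \<le> real \<Delta> * real (card V) / real q" using q by (simp add: field_simps)
  then have e2: "(real e) ^ 2 \<le> (real \<Delta> * real (card V) / real q) ^ 2" by (intro power_mono) auto
  have d1: "real D * real (card V) \<le> real (card V) * (real (card V) / real B + real B ^ (q - 1))"
    using mult_right_mono[OF S(3)[unfolded D_def[symmetric]], of "real (card V)"] by (simp add: mult.commute)
  show ?thesis using P e1 e2 d1 by linarith
qed

lemma large_bound:
  fixes x l lam :: real
  assumes dag: "is_dag V E" and indeg: "max_indeg_le V E \<Delta>"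
    and x: "x = real (card V)" and x1: "1 < x"
    and l: "l = ln x" and lam: "lam = ln l"
    and h1: "1 \<le> lam" and h2: "8 * lam \<le> l" and h3: "l ^ 2 + 1 \<le> l ^ 3"
    and h4: "x powr (-1/4) \<le> (lam / l) ^ 2"
  shows "real (Pi_BW_cc V E) \<le> (64 * real \<Delta> ^ 2 + 2) * (x * lam / l) ^ 2"
proof -
  have lpos: "8 \<le> l" using h1 h2 by linarith
  have xpos: "0 < x" using x1 by simp
  define B where "B = nat \<lceil>l ^ 2\<rceil>"
  define q where "q = nat \<lfloor>l / (4 * lam)\<rfloor>"
  have rB: "real B = of_int \<lceil>l ^ 2\<rceil>" unfolding B_def using lpos by simp
  have B1: "l ^ 2 \<le> real B" "real B \<le> l ^ 2 + 1" unfolding rB by linarith+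
  have "64 \<le> l ^ 2" using lpos power_mono[of 8 l 2] by simp
  then have Bge: "1 \<le> B" using B1 by simp
  have "0 \<le> l / (4 * lam)" using lpos h1 by simp
  then have rq: "real q = of_int \<lfloor>l / (4 * lam)\<rfloor>" unfolding q_def by simp
  have q1: "real q \<le> l / (4 * lam)" "l / (4 * lam) - 1 < real q" unfolding rq by linarith+
  have "l / (8 * lam) \<ge> 1" using h1 h2 by (simp add: field_simps)
  have "l / (4 * lam) - 1 \<ge> l / (8 * lam)" using \<open>l / (8 * lam) \<ge> 1\<close> h1
    by (simp add: field_simps)
  then have qlow: "l / (8 * lam) \<le> real q" using q1 by linarith
  then have "1 \<le> real q" using \<open>l / (8 * lam) \<ge> 1\<close> by linarith
  then have qge: "1 \<le> q" by simp
  have P: "real (Pi_BW_cc V E) \<le> (real \<Delta> * x / real q) ^ 2 + x * (x / real B + real B ^ (q - 1))"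
    using param_bound[OF dag indeg Bge qge] x by simp
  have iq: "1 / real q \<le> 8 * (lam / l)"
  proof -
    have pp: "0 < real q * (l / (8 * lam))" using qlow \<open>l / (8 * lam) \<ge> 1\<close>
      by (intro mult_pos_pos) auto
    have "1 / real q \<le> 1 / (l / (8 * lam))" using qlow pp
      by (intro divide_left_mono) auto
    then show ?thesis by simp
  qed
  have t1: "(real \<Delta> * x / real q) ^ 2 \<le> 64 * real \<Delta> ^ 2 * (x * lam / l) ^ 2"
  proof -
    have "real \<Delta> * x / real q = (real \<Delta> * x) * (1 / real q)" by simp
    also have "\<dots> \<le> (real \<Delta> * x) * (8 * (lam / l))" using iq xpos by (intro mult_left_mono) auto
    finally have "(real \<Delta> * x / real q) ^ 2 \<le> ((real \<Delta> * x) * (8 * (lam / l))) ^ 2"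
      using xpos qge by (intro power_mono) auto
    then show ?thesis by (simp add: power_mult_distrib field_simps)
  qed
  have t2: "x * (x / real B) \<le> (x * lam / l) ^ 2"
  proof -
    have pp: "0 < real B * l ^ 2" using Bge lpos by (intro mult_pos_pos) auto
    have "x / real B \<le> x / l ^ 2" using B1 xpos pp by (intro divide_left_mono) auto
    also have "\<dots> \<le> x * (lam / l) ^ 2"
    proof -
      have "1 \<le> lam ^ 2" using h1 by (simp add: one_le_power)
      then show ?thesis using xpos lpos by (simp add: field_simps power_divide)
    qed
    finally have "x * (x / real B) \<le> x * (x * (lam / l) ^ 2)" using xpos by (intro mult_left_mono) auto
    then show ?thesis by (simp add: power_mult_distrib power_divide field_simps power2_eq_square)
  qed
  have t3: "x * real B ^ (q - 1) \<le> (x * lam / l) ^ 2"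
  proof -
    have "real B ^ (q - 1) \<le> real B ^ q" using Bge by (intro power_increasing) auto
    also have "\<dots> \<le> (l ^ 3) ^ q" using B1 h3 by (intro power_mono) auto
    also have "\<dots> = exp (real q * (3 * lam))"
    proof -
      have "(l ^ 3) ^ q = exp (ln (l ^ 3)) ^ q" using lpos by simp
      also have "\<dots> = exp (real q * ln (l ^ 3))" by (simp add: exp_of_nat_mult)
      also have "ln (l ^ 3) = 3 * lam" using lpos lam by (simp add: ln_realpow)
      finally show ?thesis .
    qed
    also have "\<dots> \<le> exp (3/4 * l)"
    proof -
      have "real q * lam \<le> l / 4" using q1(1) h1 by (simp add: field_simps)
      then have "4 * (lam * real q) \<le> l" by (simp add: algebra_simps)
      then show ?thesis by simp
    qed
    also have "\<dots> = x powr (3/4)" using xpos l by (simp add: powr_def)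
    also have "\<dots> = x * x powr (-1/4)"
    proof -
      have "x powr (3/4) = x powr (1 + (-1/4))" by simp
      also have "\<dots> = x powr 1 * x powr (-1/4)" by (rule powr_add)
      finally show ?thesis using xpos by simp
    qed
    also have "\<dots> \<le> x * (lam / l) ^ 2" using h4 xpos by (intro mult_left_mono) auto
    finally have "x * real B ^ (q - 1) \<le> x * (x * (lam / l) ^ 2)" using xpos by (intro mult_left_mono) auto
    then show ?thesis by (simp add: power_mult_distrib power_divide field_simps power2_eq_square)
  qed
  have "x * (x / real B + real B ^ (q - 1)) = x * (x / real B) + x * real B ^ (q - 1)"
    by (simp add: distrib_left)
  then show ?thesis using P t1 t2 t3 by (simp add: algebra_simps)
qed

theorem mainTheorem14:
  shows "(\<forall>(V :: 'a set) E e d. is_dag V E \<longrightarrow> reducible V E e d \<longrightarrow>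
            real (Pi_BW_cc V E) \<le> real e * (real e + 1) / 2 + real d * real (card V))
       \<and> (\<forall>\<Delta> :: nat. \<exists>C :: real. \<forall>(V :: nat set) E.
            is_dag V E \<longrightarrow> max_indeg_le V E \<Delta> \<longrightarrow> card V \<ge> 3 \<longrightarrow>
            real (Pi_BW_cc V E) \<le> C * (real (card V) * ln (ln (real (card V))) / ln (real (card V))) ^ 2)"
proof (intro conjI allI impI)
  fix V :: "'a set" and E e d
  assume "is_dag V E" "reducible V E e d"
  then show "real (Pi_BW_cc V E) \<le> real e * (real e + 1) / 2 + real d * real (card V)"
    by (rule part1_real)
next
  fix \<Delta> :: nat
  have "eventually (\<lambda>x::real. 1 < x \<and> 1 \<le> ln (ln x) \<and> 8 * ln (ln x) \<le> ln x \<and>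
          (ln x) ^ 2 + 1 \<le> (ln x) ^ 3 \<and> x powr (-1/4) \<le> (ln (ln x) / ln x) ^ 2) at_top"
    by (intro eventually_conj) real_asymp+
  then obtain X :: real where X: "\<And>x::real. x \<ge> X \<Longrightarrow> 1 < x \<and> 1 \<le> ln (ln x) \<and> 8 * ln (ln x) \<le> ln x \<and>
          (ln x) ^ 2 + 1 \<le> (ln x) ^ 3 \<and> x powr (-1/4) \<le> (ln (ln x) / ln x) ^ 2"
    unfolding eventually_at_top_linorder by blast
  define N where "N = nat \<lceil>X\<rceil>"
  define f where "f m = (ln (real m) / ln (ln (real m))) ^ 2" for m :: nat
  define C where "C = 64 * real \<Delta> ^ 2 + 2 + (\<Sum>m\<in>{3..N}. f m)"
  have fnn: "0 \<le> f m" for m unfolding f_def by simp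
  have sumnn: "0 \<le> (\<Sum>m\<in>{3..N}. f m)" using fnn by (intro sum_nonneg) auto
  show "\<exists>C :: real. \<forall>(V :: nat set) E.
            is_dag V E \<longrightarrow> max_indeg_le V E \<Delta> \<longrightarrow> card V \<ge> 3 \<longrightarrow>
            real (Pi_BW_cc V E) \<le> C * (real (card V) * ln (ln (real (card V))) / ln (real (card V))) ^ 2"
  proof (intro exI[of _ C] allI impI)
    fix V :: "nat set" and E
    assume dag: "is_dag V E" and indeg: "max_indeg_le V E \<Delta>" and n3: "card V \<ge> 3"
    define x where "x = real (card V)"
    define l where "l = ln x"
    define lam where "lam = ln l"
    have x3: "3 \<le> x" unfolding x_def using n3 by simp
    have l1: "1 < l" unfolding l_def using ln3_gt_1 x3 by (smt (verit) ln_le_cancel_iff)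
    have lam0: "0 < lam" unfolding lam_def using l1 by simp
    have Ynn: "0 \<le> (x * lam / l) ^ 2" by simp
    show "real (Pi_BW_cc V E) \<le> C * (real (card V) * ln (ln (real (card V))) / ln (real (card V))) ^ 2"
    proof (cases "card V \<le> N")
      case True
      have "f (card V) \<le> (\<Sum>m\<in>{3..N}. f m)"
        using True n3 fnn by (intro member_le_sum) auto
      moreover have "0 \<le> 64 * real \<Delta> ^ 2 + 2" by simp
      ultimately have "f (card V) \<le> C" unfolding C_def by linarith
      then have fC: "(l / lam) ^ 2 \<le> C" unfolding f_def l_def lam_def x_def by simp
      have "real (Pi_BW_cc V E) \<le> x ^ 2" using trivial_bound[OF dag] unfolding x_def .
      also have "x ^ 2 = (x * lam / l) ^ 2 * (l / lam) ^ 2"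
        using l1 lam0 by (simp add: power_mult_distrib power_divide field_simps)
      also have "\<dots> \<le> (x * lam / l) ^ 2 * C" using fC Ynn by (intro mult_left_mono) auto
      finally show ?thesis unfolding x_def l_def lam_def by (simp add: mult.commute)
    next
      case False
      then have "X \<le> x" unfolding x_def N_def by linarith
      note XX = X[OF this]
      have "real (Pi_BW_cc V E) \<le> (64 * real \<Delta> ^ 2 + 2) * (x * lam / l) ^ 2"
        by (rule large_bound[OF dag indeg x_def _ l_def lam_def]) (use XX in \<open>simp_all add: l_def lam_def\<close>)
      also have "\<dots> \<le> C * (x * lam / l) ^ 2" unfolding C_def using sumnn Ynn
        by (intro mult_right_mono) auto
      finally show ?thesis unfolding x_def l_def lam_def .
    qed
  qed
qed

end
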